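(* Assume A1, A2, A4 and A5, and let $t,r\in\mathbb N_+$. Then \[ (1-\sup_{i\in S}q_i)\,\mathbb E\Big(\frac{1}{|\boldsymbol Z_t|^r}\,\Big|\,|\boldsymbol Z_t|>0\Big)\le\mathbb E\Big(\frac{1}{|\boldsymbol Z_t|^r}\,\Big|\,|\boldsymbol Z_\infty|>0\Big)\le\frac{1}{1-\sup_{i\in S}q_i}\,\mathbb E\Big(\frac{1}{|\boldsymbol Z_t|^r}\,\Big|\,|\boldsymbol Z_t|>0\Big). \]
   Context: Setting. Type space $S=[d]$ if $d<\infty$, $S=\mathbb N_+$ if $d=\infty$. $\boldsymbol Z^{i_0}=(\boldsymbol Z^{i_0}_t)_{t\ge0}$ is a multi-type Galton–Watson process on $\mathbb N_0^d$ started from one type-$i_0$ individual: each individual of type $i$ independently produces an offspring vector with law $p_i$. $|\boldsymbol Z_t|$ is the total number of individuals in generation $t$. Mean matrix $\boldsymbol M=(\mathbb E Z_1^{i,j})$, powers $m^{(r)}_{ij}$. A1: $\boldsymbol M$ irreducible and all $m^{(r)}_{ij}$ finite; $R$ is the common radius of convergence of $\sum_n m^{(n)}_{ij}z^n$. A2: $\sum_n m^{(n)}_{ij}R^n=\infty$ for all $i,j$; the strictly positive $\boldsymbol\nu,\boldsymbol u$ with $R\boldsymbol\nu\boldsymbol M=\boldsymbol\nu$, $R\boldsymbol M\boldsymbol u=\boldsymbol u$ satisfy $\boldsymbol u\cdot\boldsymbol\nu<\infty$ (normalised $\boldsymbol u\cdot\boldsymbol\nu=1$, $\sum\nu_i=1$);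 $R\in(0,1)$. $q_i$ = extinction probability of the process started from type $i$. A4: $\sup_iq_i<1$. A5: $\inf_iu_i>0$. $\{|\boldsymbol Z_\infty|>0\}=\bigcap_T\{|\boldsymbol Z_T|>0\}$. *)

theory Defs
  imports "HOL-Probability.Probability" "HOL-Library.Multiset"
begin

text \<open>A population (generation) is a finite multiset of types; an offspring vector of an
  individual is likewise a finite multiset of types (count M j = number of type-j children).\<close>

definition type_space :: "enat \<Rightarrow> nat set" where
  "type_space d = {i. 1 \<le> i \<and> enat i \<le> d}"

fun offspring_list :: "(nat \<Rightarrow> nat multiset pmf) \<Rightarrow> nat list \<Rightarrow> nat multiset pmf" where
  "offspring_list p [] = return_pmf {#}"
| "offspring_list p (i # is) =
     bind_pmf (p i) (\<lambda>a. bind_pmf (offspring_list p is) (\<lambda>b. return_pmf (a + b)))"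

definition next_gen :: "(nat \<Rightarrow> nat multiset pmf) \<Rightarrow> nat multiset \<Rightarrow> nat multiset pmf" where
  "next_gen p x = offspring_list p (sorted_list_of_multiset x)"

fun gen_law :: "(nat \<Rightarrow> nat multiset pmf) \<Rightarrow> nat multiset \<Rightarrow> nat \<Rightarrow> nat multiset pmf" where
  "gen_law p x 0 = return_pmf x"
| "gen_law p x (Suc t) = bind_pmf (gen_law p x t) (next_gen p)"

text \<open>Extinction probability q_i of the process started from one type-i individual:
  P(exists t. Z_t = 0) = sup_t P(Z_t = 0) (extinction is absorbing).\<close>
definition ext_prob :: "(nat \<Rightarrow> nat multiset pmf) \<Rightarrow> nat \<Rightarrow> real" where
  "ext_prob p i = (SUP t. measure_pmf.prob (gen_law p {#i#} t) {{#}})"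

definition mean_mat :: "(nat \<Rightarrow> nat multiset pmf) \<Rightarrow> nat \<Rightarrow> nat \<Rightarrow> ennreal" where
  "mean_mat p i j = (\<integral>\<^sup>+ x. ennreal (real (count x j)) \<partial>measure_pmf (p i))"

fun mean_pow :: "nat set \<Rightarrow> (nat \<Rightarrow> nat multiset pmf) \<Rightarrow> nat \<Rightarrow> nat \<Rightarrow> nat \<Rightarrow> ennreal" where
  "mean_pow S p 0 i j = (if i = j then 1 else 0)"
| "mean_pow S p (Suc n) i j = (\<Sum>k. (if k \<in> S then mean_mat p i k * mean_pow S p n k j else 0))"

definition is_MGW ::
  "'a measure \<Rightarrow> (nat \<Rightarrow> 'a \<Rightarrow> nat multiset) \<Rightarrow> (nat \<Rightarrow> nat multiset pmf) \<Rightarrow> nat \<Rightarrow> bool" where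
  "is_MGW M Z p i0 \<longleftrightarrow> prob_space M \<and>
     (\<forall>t. Z t \<in> measurable M (count_space UNIV)) \<and>
     (\<forall>t (h :: nat \<Rightarrow> nat multiset).
        measure M {\<omega> \<in> space M. \<forall>s\<le>t. Z s \<omega> = h s} =
        (if h 0 = {#i0#} then 1 else 0) * (\<Prod>s<t. pmf (next_gen p (h s)) (h (Suc s))))"

definition cond_exp_event :: "'a measure \<Rightarrow> ('a \<Rightarrow> real) \<Rightarrow> 'a set \<Rightarrow> real" where
  "cond_exp_event M X A = (\<integral>\<omega>. X \<omega> * indicator A \<omega> \<partial>M) / measure M A"

end

theory Submission
  imports Defs
begin


instance multiset :: (countable) countable
proof (rule countable_classI[of "\<lambda>M. to_nat (sorted_list_of_multiset (image_mset to_nat M))"])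
  fix x y :: "'a multiset"
  assume "to_nat (sorted_list_of_multiset (image_mset to_nat x)) = to_nat (sorted_list_of_multiset (image_mset to_nat y))"
  then have "sorted_list_of_multiset (image_mset to_nat x) = sorted_list_of_multiset (image_mset to_nat y)" by simp
  then have "image_mset to_nat x = image_mset to_nat y"
    by (metis mset_sorted_list_of_multiset)
  then show "x = y"
    by (metis inj_def inj_to_nat multiset.inj_map_strong)
qed

definition conv :: "nat multiset pmf \<Rightarrow> nat multiset pmf \<Rightarrow> nat multiset pmf" where
  "conv P Q = bind_pmf P (\<lambda>a. bind_pmf Q (\<lambda>b. return_pmf (a + b)))"

lemma conv_comm: "conv P Q = conv Q P"
  unfolding conv_def by (subst bind_commute_pmf) (simp add: add.commute)

lemma conv_assoc: "conv (conv P Q) R = conv P (conv Q R)"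
  unfolding conv_def by (simp add: bind_assoc_pmf bind_return_pmf add.assoc)

lemma conv_0: "conv (return_pmf {#}) P = P"
  unfolding conv_def by (simp add: bind_return_pmf bind_return_pmf')

lemma ol_Cons: "offspring_list p (i # is) = conv (p i) (offspring_list p is)"
  by (simp add: conv_def)

lemma ol_append: "offspring_list p (xs @ ys) = conv (offspring_list p xs) (offspring_list p ys)"
  by (induction xs) (simp_all add: conv_0 ol_Cons conv_assoc del: offspring_list.simps(2))

lemma ol_perm: "mset xs = mset ys \<Longrightarrow> offspring_list p xs = offspring_list p ys"
proof (induction xs arbitrary: ys)
  case Nil
  then show ?case by simp
next
  case (Cons x xs)
  then have "x \<in> set ys" by (metis list.set_intros(1) set_mset_mset)
  then obtain ys1 ys2 where ys: "ys = ys1 @ x # ys2" by (meson split_list)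
  with Cons.prems have "mset xs = mset (ys1 @ ys2)" by simp
  then have IH: "offspring_list p xs = offspring_list p (ys1 @ ys2)" using Cons.IH by blast
  have "offspring_list p ys = conv (offspring_list p ys1) (conv (p x) (offspring_list p ys2))"
    by (simp add: ys ol_append ol_Cons del: offspring_list.simps(2))
  also have "\<dots> = conv (p x) (conv (offspring_list p ys1) (offspring_list p ys2))"
    by (metis conv_assoc conv_comm)
  also have "\<dots> = offspring_list p (x # xs)"
    by (simp add: IH ol_append ol_Cons del: offspring_list.simps(2))
  finally show ?case by simp
qed

lemma next_gen_add: "next_gen p (a + b) = conv (next_gen p a) (next_gen p b)"
  unfolding next_gen_def
  by (subst ol_append[symmetric], rule ol_perm) simp

lemma next_gen_empty: "next_gen p {#} = return_pmf {#}"
  by (simp add: next_gen_def)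

lemma gen_law_empty: "gen_law p {#} s = return_pmf {#}"
  by (induction s) (simp_all add: bind_return_pmf next_gen_empty)

lemma gen_law_add: "gen_law p (a + b) s = conv (gen_law p a s) (gen_law p b s)"
proof (induction s)
  case 0
  then show ?case by (simp add: conv_def bind_return_pmf)
next
  case (Suc s)
  have "gen_law p (a + b) (Suc s) = bind_pmf (conv (gen_law p a s) (gen_law p b s)) (next_gen p)"
    using Suc by simp
  also have "\<dots> = bind_pmf (gen_law p a s) (\<lambda>\<alpha>. bind_pmf (gen_law p b s) (\<lambda>\<beta>.
      conv (next_gen p \<alpha>) (next_gen p \<beta>)))"
    by (simp add: conv_def bind_assoc_pmf bind_return_pmf next_gen_add)
  also have "\<dots> = conv (gen_law p a (Suc s)) (gen_law p b (Suc s))"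
    unfolding conv_def gen_law.simps bind_assoc_pmf
    by (rule bind_pmf_cong[OF refl], subst bind_commute_pmf, rule refl)
  finally show ?case .
qed

lemma pmf_conv_empty: "pmf (conv P Q) {#} = pmf P {#} * pmf Q {#}"
proof -
  have "conv P Q = map_pmf (\<lambda>(a, b). a + b) (pair_pmf P Q)"
    by (simp add: conv_def pair_pmf_def map_pmf_def bind_assoc_pmf bind_return_pmf)
  moreover have "(\<lambda>(a, b). a + b) -` {{#}} = {({#}, {#})}" by auto
  ultimately have "pmf (conv P Q) {#} = measure_pmf.prob (pair_pmf P Q) {({#}, {#})}"
    by (metis pmf_map)
  then show ?thesis
    by (simp add: measure_pmf_single pmf_pair)
qed

lemma gen_law_ext_mono:
  assumes "i \<in># x"
  shows "pmf (gen_law p x s) {#} \<le> pmf (gen_law p {#i#} s) {#}"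
proof -
  have "x = {#i#} + (x - {#i#})" using assms by simp
  then have "pmf (gen_law p x s) {#} = pmf (gen_law p {#i#} s) {#} * pmf (gen_law p (x - {#i#}) s) {#}"
    by (metis gen_law_add pmf_conv_empty)
  then show ?thesis by (simp add: mult_left_le pmf_le_1)
qed


lemma ol_types: "set l \<subseteq> S \<Longrightarrow> \<forall>i\<in>S. \<forall>x\<in>set_pmf (p i). set_mset x \<subseteq> S
   \<Longrightarrow> y \<in> set_pmf (offspring_list p l) \<Longrightarrow> set_mset y \<subseteq> S"
  by (induction l arbitrary: y) (auto, blast, blast)

lemma last_len: "length x = Suc n \<Longrightarrow> last x = x ! n"
  by (metis diff_Suc_1 last_conv_nth length_0_conv nat.distinct(1))

lemma gen_law_types: "set_mset x \<subseteq> S \<Longrightarrow> \<forall>i\<in>S. \<forall>x\<in>set_pmf (p i). set_mset x \<subseteq> S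
   \<Longrightarrow> y \<in> set_pmf (gen_law p x t) \<Longrightarrow> set_mset y \<subseteq> S"
proof (induction t arbitrary: y)
  case 0
  then show ?case by simp
next
  case (Suc t)
  then obtain z where z: "z \<in> set_pmf (gen_law p x t)" "y \<in> set_pmf (next_gen p z)" by auto
  then have "set_mset z \<subseteq> S" using Suc by blast
  then show ?case using z(2) Suc.prems(2) unfolding next_gen_def
    by (intro ol_types[of _ S p]) auto
qed

lemma gen_law_split: "gen_law p x (a + b) = bind_pmf (gen_law p x a) (\<lambda>y. gen_law p y b)"
  by (induction b) (simp_all add: bind_return_pmf' bind_assoc_pmf)

fun path_law :: "(nat \<Rightarrow> nat multiset pmf) \<Rightarrow> nat \<Rightarrow> nat \<Rightarrow> nat multiset list pmf" where
  "path_law p i0 0 = return_pmf [{#i0#}]"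
| "path_law p i0 (Suc N) = bind_pmf (path_law p i0 N) (\<lambda>l. map_pmf (\<lambda>y. l @ [y]) (next_gen p (last l)))"

lemma pl_len: "l \<in> set_pmf (path_law p i0 N) \<Longrightarrow> length l = Suc N"
  by (induction N arbitrary: l) auto

lemma pl_last: "map_pmf last (path_law p i0 N) = gen_law p {#i0#} N"
proof (induction N)
  case 0
  then show ?case by simp
next
  case (Suc N)
  have "map_pmf last (path_law p i0 (Suc N)) = bind_pmf (path_law p i0 N) (\<lambda>l. next_gen p (last l))"
    by (simp add: map_bind_pmf pmf.map_comp o_def)
  also have "\<dots> = bind_pmf (map_pmf last (path_law p i0 N)) (next_gen p)"
    by (simp add: bind_map_pmf)
  finally show ?case using Suc by simp
qed

lemma pl_ext: "l \<in> set_pmf (path_law p i0 N) \<Longrightarrow> T \<le> N \<Longrightarrow> l ! T = {#} \<Longrightarrow> l ! N = {#}"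
proof (induction N arbitrary: l T)
  case 0
  then show ?case by simp
next
  case (Suc N)
  then obtain l' y where l: "l = l' @ [y]" "l' \<in> set_pmf (path_law p i0 N)" "y \<in> set_pmf (next_gen p (last l'))"
    by auto
  have len: "length l' = Suc N" using l(2) pl_len by blast
  show ?case
  proof (cases "T = Suc N")
    case True
    then show ?thesis using Suc.prems by simp
  next
    case False
    then have "T \<le> N" using Suc.prems by simp
    moreover have "l' ! T = {#}" using Suc.prems(3) l(1) len \<open>T \<le> N\<close> by (simp add: nth_append)
    ultimately have "l' ! N = {#}" using Suc.IH l(2) by blast
    then have "last l' = {#}" using len by (simp add: last_len)
    then have "y = {#}" using l(3) by (simp add: next_gen_empty)
    then show ?thesis using l(1) len by (simp add: nth_append)
  qed
qed

lemma pl_pair: "map_pmf (\<lambda>l. (l ! t, l ! (t + k))) (path_law p i0 (t + k)) =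
   bind_pmf (gen_law p {#i0#} t) (\<lambda>x. map_pmf (Pair x) (gen_law p x k))"
proof (induction k)
  case 0
  have "map_pmf (\<lambda>l. (l ! t, l ! t)) (path_law p i0 t) = map_pmf (\<lambda>l. (last l, last l)) (path_law p i0 t)"
    by (rule map_pmf_cong) (auto dest!: pl_len simp: last_len)
  also have "\<dots> = map_pmf (\<lambda>x. (x, x)) (gen_law p {#i0#} t)"
    by (simp add: pl_last[symmetric] pmf.map_comp o_def)
  also have "\<dots> = bind_pmf (gen_law p {#i0#} t) (\<lambda>x. map_pmf (Pair x) (gen_law p x 0))"
    by (simp add: map_pmf_def bind_return_pmf)
  finally show ?case by simp
next
  case (Suc k)
  have "map_pmf (\<lambda>l. (l ! t, l ! (t + Suc k))) (path_law p i0 (t + Suc k)) =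
     bind_pmf (path_law p i0 (t + k)) (\<lambda>l. map_pmf (\<lambda>y. ((l @ [y]) ! t, (l @ [y]) ! (t + Suc k))) (next_gen p (last l)))"
    by (simp add: map_bind_pmf pmf.map_comp o_def)
  also have "\<dots> = bind_pmf (path_law p i0 (t + k)) (\<lambda>l. map_pmf (Pair (l ! t)) (next_gen p (l ! (t + k))))"
  proof (rule bind_pmf_cong[OF refl])
    fix l assume "l \<in> set_pmf (path_law p i0 (t + k))"
    then have len: "length l = Suc (t + k)" by (rule pl_len)
    then show "map_pmf (\<lambda>y. ((l @ [y]) ! t, (l @ [y]) ! (t + Suc k))) (next_gen p (last l)) =
      map_pmf (Pair (l ! t)) (next_gen p (l ! (t + k)))"
      by (simp add: nth_append last_len)
  qed
  also have "\<dots> = bind_pmf (map_pmf (\<lambda>l. (l ! t, l ! (t + k))) (path_law p i0 (t + k)))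
      (\<lambda>(a, b). map_pmf (Pair a) (next_gen p b))"
    by (simp add: bind_map_pmf)
  also have "\<dots> = bind_pmf (gen_law p {#i0#} t) (\<lambda>x. map_pmf (Pair x) (gen_law p x (Suc k)))"
    by (simp add: Suc bind_assoc_pmf bind_map_pmf map_bind_pmf)
  finally show ?case .
qed

lemma pl_pmf: "pmf (path_law p i0 N) l = (if length l = Suc N then
    (if l ! 0 = {#i0#} then 1 else 0) * (\<Prod>s<N. pmf (next_gen p (l ! s)) (l ! Suc s)) else 0)"
proof (induction N arbitrary: l)
  case 0
  show ?case
  proof (cases "length l = 1")
    case True
    then obtain a where "l = [a]" by (metis One_nat_def length_0_conv length_Suc_conv)
    then show ?thesis by (simp add: pmf_return)
  next
    case False
    then show ?thesis by (auto simp: pmf_return indicator_def)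
  qed
next
  case (Suc N)
  show ?case
  proof (cases "length l = Suc (Suc N)")
    case False
    then have "l \<notin> set_pmf (path_law p i0 (Suc N))" using pl_len by metis
    then show ?thesis using False by (metis set_pmf_iff)
  next
    case True
    define l' where "l' = butlast l"
    define y where "y = last l"
    have l: "l = l' @ [y]" using True unfolding l'_def y_def
      by (metis append_butlast_last_id list.size(3) nat.distinct(1))
    have len: "length l' = Suc N" using True l by simp
    have "pmf (path_law p i0 (Suc N)) l =
       (\<integral>x. pmf (map_pmf (\<lambda>y. x @ [y]) (next_gen p (last x))) l \<partial>measure_pmf (path_law p i0 N))"
      by (simp add: pmf_bind)
    also have "\<dots> = (\<integral>x. pmf (next_gen p (last l')) y * indicator {l'} x \<partial>measure_pmf (path_law p i0 N))"
    proof (rule Bochner_Integration.integral_cong[OF refl])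
      fix x
      show "pmf (map_pmf (\<lambda>y. x @ [y]) (next_gen p (last x))) l = pmf (next_gen p (last l')) y * indicator {l'} x"
      proof (cases "x = l'")
        case True
        have ij: "inj (\<lambda>y. l' @ [y])" by (simp add: inj_def)
        show ?thesis using pmf_map_inj'[OF ij, of "next_gen p (last l')" y] l True by simp
      next
        case False
        then have "l \<notin> set_pmf (map_pmf (\<lambda>y. x @ [y]) (next_gen p (last x)))" using l by auto
        then show ?thesis using False by (metis set_pmf_iff indicator_simps(2) mult_zero_right singletonD)
      qed
    qed
    also have "\<dots> = pmf (next_gen p (last l')) y * pmf (path_law p i0 N) l'"
      by (simp add: measure_pmf_single)
    also have "\<dots> = (if l ! 0 = {#i0#} then 1 else 0) * (\<Prod>s<Suc N. pmf (next_gen p (l ! s)) (l ! Suc s))"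
      using len l by (simp add: Suc nth_append last_len)
    finally show ?thesis using True by simp
  qed
qed




lemma W_eq: "(map (\<lambda>s. Z s \<omega>) [0..<Suc N] = l) \<longleftrightarrow> (length l = Suc N \<and> (\<forall>s\<le>N. Z s \<omega> = l ! s))"
proof -
  have "(map (\<lambda>s. Z s \<omega>) [0..<Suc N] = l) \<longleftrightarrow> (length l = Suc N \<and> (\<forall>s<Suc N. map (\<lambda>s. Z s \<omega>) [0..<Suc N] ! s = l ! s))"
    by (metis (no_types, lifting) diff_zero length_map length_upt list_eq_iff_nth_eq)
  also have "\<dots> \<longleftrightarrow> (length l = Suc N \<and> (\<forall>s\<le>N. Z s \<omega> = l ! s))"
    by (metis (no_types, lifting) less_Suc_eq_le nth_map_upt add_0 diff_zero)
  finally show ?thesis .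
qed
lemma W_pre: "(\<lambda>\<omega>. map (\<lambda>s. Z s \<omega>) [0..<Suc N]) -` {l} \<inter> space M =
   (if length l = Suc N then {\<omega>\<in>space M. \<forall>s\<le>N. Z s \<omega> = l ! s} else {})"
  using W_eq[of Z _ N l] by auto

lemma W_meas:
  assumes "is_MGW M Z p i0"
  shows "(\<lambda>\<omega>. map (\<lambda>s. Z s \<omega>) [0..<Suc N]) \<in> measurable M (count_space UNIV)"
proof -
  have [measurable]: "Z s \<in> measurable M (count_space UNIV)" for s
    using assms by (simp add: is_MGW_def)
  have "{\<omega>\<in>space M. \<forall>s\<le>N. Z s \<omega> = l ! s} \<in> sets M" for l
    by measurable
  then show ?thesis
    unfolding measurable_count_space_eq2_countable W_pre by auto
qed

lemma W_distr:
  assumes "is_MGW M Z p i0"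
  shows "distr M (count_space UNIV) (\<lambda>\<omega>. map (\<lambda>s. Z s \<omega>) [0..<Suc N]) = measure_pmf (path_law p i0 N)"
proof (rule measure_eqI_countable[where A=UNIV])
  interpret prob_space M using assms by (simp add: is_MGW_def)
  show "countable (UNIV :: nat multiset list set)" by simp
  fix l :: "nat multiset list"
  have "emeasure (distr M (count_space UNIV) (\<lambda>\<omega>. map (\<lambda>s. Z s \<omega>) [0..<Suc N])) {l}
     = emeasure M ((\<lambda>\<omega>. map (\<lambda>s. Z s \<omega>) [0..<Suc N]) -` {l} \<inter> space M)"
    by (rule emeasure_distr[OF W_meas[OF assms]]) simp
  also have "\<dots> = ennreal (pmf (path_law p i0 N) l)"
  proof (cases "length l = Suc N")
    case True
    have "measure M {\<omega>\<in>space M. \<forall>s\<le>N. Z s \<omega> = l ! s} = pmf (path_law p i0 N) l"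
      using assms True unfolding is_MGW_def pl_pmf by simp
    then show ?thesis unfolding W_pre using True by (simp add: emeasure_eq_measure)
  next
    case False
    then show ?thesis unfolding W_pre by (simp add: pl_pmf)
  qed
  also have "\<dots> = emeasure (measure_pmf (path_law p i0 N)) {l}"
    by (simp add: emeasure_pmf_single)
  finally show "emeasure (distr M (count_space UNIV) (\<lambda>\<omega>. map (\<lambda>s. Z s \<omega>) [0..<Suc N])) {l} =
    emeasure (measure_pmf (path_law p i0 N)) {l}" .
qed auto

lemma W_integral:
  fixes F :: "nat multiset list \<Rightarrow> real"
  assumes "is_MGW M Z p i0"
  shows "(\<integral>\<omega>. F (map (\<lambda>s. Z s \<omega>) [0..<Suc N]) \<partial>M) = measure_pmf.expectation (path_law p i0 N) F"
  by (subst W_distr[OF assms, symmetric], subst integral_distr[OF W_meas[OF assms]]) simp_all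

lemma integral_bind_pmf_bounded:
  fixes f :: "'b \<Rightarrow> real"
  assumes "\<And>x. \<bar>f x\<bar> \<le> B"
  shows "measure_pmf.expectation (bind_pmf P K) f = measure_pmf.expectation P (\<lambda>x. measure_pmf.expectation (K x) f)"
  unfolding measure_pmf_bind
proof (rule integral_bind[where K="count_space UNIV" and B=B and B'=1])
  show "(\<lambda>x. measure_pmf (K x)) \<in> measurable (measure_pmf P) (subprob_algebra (count_space UNIV))"
    by (simp add: space_subprob_algebra measure_pmf.subprob_space_axioms)
  show "finite_measure (measure_pmf P)" by (rule measure_pmf.finite_measure_axioms)
  show "AE x in measure_pmf P. emeasure (measure_pmf (K x)) (space (measure_pmf (K x))) \<le> ennreal 1"
    by (simp add: measure_pmf.emeasure_le_1)
qed (simp_all add: assms)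



lemma ext_prob_ge: "pmf (gen_law p {#i#} k) {#} \<le> ext_prob p i"
  unfolding ext_prob_def
proof -
  have "pmf (gen_law p {#i#} k) {#} = measure_pmf.prob (gen_law p {#i#} k) {{#}}"
    by (simp add: measure_pmf_single)
  also have "\<dots> \<le> (SUP t. measure_pmf.prob (gen_law p {#i#} t) {{#}})"
    by (rule cSUP_upper) (auto intro!: bdd_aboveI[where M=1])
  finally show "pmf (gen_law p {#i#} k) {#} \<le> (SUP t. measure_pmf.prob (gen_law p {#i#} t) {{#}})" .
qed

lemma pmf_side:
  fixes g :: "nat multiset \<Rightarrow> real"
  assumes types: "\<forall>i\<in>S. \<forall>x\<in>set_pmf (p i). set_mset x \<subseteq> S" and i0: "i0 \<in> S"
    and qbound: "\<forall>i\<in>S. ext_prob p i \<le> q" and q1: "q \<le> 1"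
    and g0: "g {#} = 0" and gnn: "\<And>x. 0 \<le> g x" and g1: "\<And>x. g x \<le> 1"
  shows "measure_pmf.expectation (path_law p i0 (t + k))
            (\<lambda>l. g (l ! t) * (if \<exists>T\<le>t + k. l ! T = {#} then 1 else 0))
       \<le> q * measure_pmf.expectation (gen_law p {#i0#} t) g"
proof -
  let ?G = "gen_law p {#i0#} t"
  have "measure_pmf.expectation (path_law p i0 (t + k))
            (\<lambda>l. g (l ! t) * (if \<exists>T\<le>t + k. l ! T = {#} then 1 else 0))
      = measure_pmf.expectation (path_law p i0 (t + k))
            (\<lambda>l. (\<lambda>(a, b). g a * (if b = {#} then 1 else 0)) (l ! t, l ! (t + k)))"
  proof (rule integral_cong_AE)
    show "AE l in measure_pmf (path_law p i0 (t + k)).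
       g (l ! t) * (if \<exists>T\<le>t + k. l ! T = {#} then 1 else 0) =
       (\<lambda>(a, b). g a * (if b = {#} then 1 else 0)) (l ! t, l ! (t + k))"
    proof (rule AE_pmfI)
      fix l assume l: "l \<in> set_pmf (path_law p i0 (t + k))"
      have "(\<exists>T\<le>t + k. l ! T = {#}) \<longleftrightarrow> l ! (t + k) = {#}"
        using pl_ext[OF l] by blast
      then show "g (l ! t) * (if \<exists>T\<le>t + k. l ! T = {#} then 1 else 0) =
       (\<lambda>(a, b). g a * (if b = {#} then 1 else 0)) (l ! t, l ! (t + k))" by simp
    qed
  qed simp_all
  also have "\<dots> = measure_pmf.expectation (map_pmf (\<lambda>l. (l ! t, l ! (t + k))) (path_law p i0 (t + k)))
       (\<lambda>(a, b). g a * (if b = {#} then 1 else 0))"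
    by simp
  also have "\<dots> = measure_pmf.expectation (bind_pmf ?G (\<lambda>x. map_pmf (Pair x) (gen_law p x k)))
       (\<lambda>(a, b). g a * (if b = {#} then 1 else 0))"
    by (simp only: pl_pair)
  also have "\<dots> = measure_pmf.expectation ?G (\<lambda>x. measure_pmf.expectation (map_pmf (Pair x) (gen_law p x k))
       (\<lambda>(a, b). g a * (if b = {#} then 1 else 0)))"
    by (rule integral_bind_pmf_bounded[where B=1]) (auto simp: g1 abs_le_iff intro: order_trans[OF _ gnn] split: prod.splits)
  also have "\<dots> = measure_pmf.expectation ?G (\<lambda>x. g x * pmf (gen_law p x k) {#})"
  proof (rule Bochner_Integration.integral_cong[OF refl])
    fix x
    have "measure_pmf.expectation (map_pmf (Pair x) (gen_law p x k)) (\<lambda>(a, b). g a * (if b = {#} then 1 else 0))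
       = measure_pmf.expectation (gen_law p x k) (\<lambda>b. g x * indicator {{#}} b)"
      by (simp add: indicator_def of_bool_def)
    also have "\<dots> = g x * pmf (gen_law p x k) {#}"
      by (simp add: measure_pmf_single)
    finally show "measure_pmf.expectation (map_pmf (Pair x) (gen_law p x k)) (\<lambda>(a, b). g a * (if b = {#} then 1 else 0))
       = g x * pmf (gen_law p x k) {#}" .
  qed
  also have "\<dots> \<le> measure_pmf.expectation ?G (\<lambda>x. q * g x)"
  proof (rule integral_mono_AE)
    show "integrable (measure_pmf ?G) (\<lambda>x. g x * pmf (gen_law p x k) {#})"
      by (rule measure_pmf.integrable_const_bound[where B=1])
         (auto simp: gnn g1 pmf_le_1 intro!: AE_I2 mult_le_one)
    show "integrable (measure_pmf ?G) (\<lambda>x. q * g x)"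
      by (intro integrable_mult_right measure_pmf.integrable_const_bound[where B=1])
         (auto simp: gnn g1 intro!: AE_I2)
    show "AE x in measure_pmf ?G. g x * pmf (gen_law p x k) {#} \<le> q * g x"
    proof (rule AE_pmfI)
      fix x assume x: "x \<in> set_pmf ?G"
      show "g x * pmf (gen_law p x k) {#} \<le> q * g x"
      proof (cases "x = {#}")
        case True
        then show ?thesis using g0 by simp
      next
        case False
        then obtain i where i: "i \<in># x" by (meson multiset_nonemptyE)
        have "set_mset x \<subseteq> S"
          using gen_law_types[of "{#i0#}" S p x t] i0 types x by simp
        then have "i \<in> S" using i by blast
        then have "pmf (gen_law p x k) {#} \<le> q"
          using gen_law_ext_mono[OF i, of p k] ext_prob_ge[of p i k] qbound by fastforce
        then show ?thesis using gnn[of x] by (metis mult.commute mult_left_mono)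
      qed
    qed
  qed
  also have "\<dots> = q * measure_pmf.expectation ?G g"
    by simp
  finally show ?thesis .
qed


lemma key:
  fixes g :: "nat multiset \<Rightarrow> real"
  assumes MGW: "is_MGW M Z p i0"
    and types: "\<forall>i\<in>S. \<forall>x\<in>set_pmf (p i). set_mset x \<subseteq> S" and i0: "i0 \<in> S"
    and qbound: "\<forall>i\<in>S. ext_prob p i \<le> q" and q1: "q \<le> 1"
    and g0: "g {#} = 0" and gnn: "\<And>x. 0 \<le> g x" and g1: "\<And>x. g x \<le> 1"
  shows "(\<integral>\<omega>. g (Z t \<omega>) * indicator (space M - (\<Inter>T. {\<omega>\<in>space M. size (Z T \<omega>) > 0})) \<omega> \<partial>M)
     \<le> q * (\<integral>\<omega>. g (Z t \<omega>) \<partial>M)"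
proof -
  interpret prob_space M using MGW by (simp add: is_MGW_def)
  have Zm[measurable]: "Z s \<in> measurable M (count_space UNIV)" for s
    using MGW by (simp add: is_MGW_def)
  define C where "C N = {\<omega>\<in>space M. \<exists>T\<le>N. Z T \<omega> = {#}}" for N
  define A where "A = (\<Inter>T. {\<omega>\<in>space M. size (Z T \<omega>) > 0})"
  have WZ: "map (\<lambda>s. Z s \<omega>) [0..<Suc N] ! T = Z T \<omega>" if "T \<le> N" for N T \<omega>
    using that by (simp add: nth_map_upt less_Suc_eq_le del: upt_Suc)
  have EG: "(\<integral>\<omega>. g (Z t \<omega>) \<partial>M) = measure_pmf.expectation (gen_law p {#i0#} t) g"
  proof -
    have "(\<integral>\<omega>. g (Z t \<omega>) \<partial>M) = (\<integral>\<omega>. (\<lambda>l. g (l ! t)) (map (\<lambda>s. Z s \<omega>) [0..<Suc t]) \<partial>M)"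
      using WZ[of t t] by simp
    also have "\<dots> = measure_pmf.expectation (path_law p i0 t) (\<lambda>l. g (l ! t))"
      by (rule W_integral[OF MGW])
    also have "\<dots> = measure_pmf.expectation (map_pmf (\<lambda>l. l ! t) (path_law p i0 t)) g"
      by simp
    also have "map_pmf (\<lambda>l. l ! t) (path_law p i0 t) = map_pmf last (path_law p i0 t)"
      by (rule map_pmf_cong) (auto dest!: pl_len simp: last_len)
    finally show ?thesis by (simp add: pl_last)
  qed
  have step: "(\<integral>\<omega>. g (Z t \<omega>) * indicator (C N) \<omega> \<partial>M) \<le> q * (\<integral>\<omega>. g (Z t \<omega>) \<partial>M)"
    if "N \<ge> t" for N
  proof -
    obtain k where N: "N = t + k" using \<open>N \<ge> t\<close> le_Suc_ex by blast
    have "(\<integral>\<omega>. g (Z t \<omega>) * indicator (C N) \<omega> \<partial>M) =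
      (\<integral>\<omega>. (\<lambda>l. g (l ! t) * (if \<exists>T\<le>t + k. l ! T = {#} then 1 else 0)) (map (\<lambda>s. Z s \<omega>) [0..<Suc (t + k)]) \<partial>M)"
    proof (rule Bochner_Integration.integral_cong[OF refl])
      fix \<omega> assume "\<omega> \<in> space M"
      then show "g (Z t \<omega>) * indicator (C N) \<omega> =
        (\<lambda>l. g (l ! t) * (if \<exists>T\<le>t + k. l ! T = {#} then 1 else 0)) (map (\<lambda>s. Z s \<omega>) [0..<Suc (t + k)])"
        using WZ[of _ "t + k" \<omega>] by (auto simp: C_def N indicator_def)
    qed
    also have "\<dots> = measure_pmf.expectation (path_law p i0 (t + k))
            (\<lambda>l. g (l ! t) * (if \<exists>T\<le>t + k. l ! T = {#} then 1 else 0))"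
      by (rule W_integral[OF MGW])
    also have "\<dots> \<le> q * measure_pmf.expectation (gen_law p {#i0#} t) g"
      by (rule pmf_side[of S p i0 q g t k]) (use types i0 qbound q1 g0 gnn g1 in auto)
    finally show ?thesis using EG by simp
  qed
  have CA: "space M - A = (\<Union>N. C N)"
  proof
    show "space M - A \<subseteq> (\<Union>N. C N)"
      by (auto simp: A_def C_def)
    show "(\<Union>N. C N) \<subseteq> space M - A"
    proof
      fix \<omega> assume "\<omega> \<in> (\<Union>N. C N)"
      then obtain T where T: "\<omega> \<in> space M" "Z T \<omega> = {#}" by (auto simp: C_def)
      then have "\<omega> \<notin> {\<omega>\<in>space M. size (Z T \<omega>) > 0}" by simp
      then show "\<omega> \<in> space M - A" using T unfolding A_def by blast
    qed
  qed
  have Cm: "C N \<in> sets M" for N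
    unfolding C_def by measurable
  have Am: "space M - A \<in> sets M"
    unfolding CA using Cm by blast
  have gm: "(\<lambda>\<omega>. g (Z t \<omega>)) \<in> borel_measurable M"
    by (rule measurable_compose[OF Zm borel_measurable_count_space])
  have lim: "(\<lambda>N. \<integral>\<omega>. g (Z t \<omega>) * indicator (C N) \<omega> \<partial>M) \<longlonglongrightarrow>
     (\<integral>\<omega>. g (Z t \<omega>) * indicator (space M - A) \<omega> \<partial>M)"
  proof (rule integral_dominated_convergence[where w="\<lambda>_. 1"])
    show "(\<lambda>\<omega>. g (Z t \<omega>) * indicator (space M - A) \<omega>) \<in> borel_measurable M"
      using gm Am by measurable
    show "(\<lambda>\<omega>. g (Z t \<omega>) * indicator (C N) \<omega>) \<in> borel_measurable M" for N
      using gm Cm by measurable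
    show "integrable M (\<lambda>_. 1::real)" by simp
    show "AE \<omega> in M. norm (g (Z t \<omega>) * indicator (C N) \<omega>) \<le> 1" for N
      by (rule AE_I2) (auto simp: indicator_def abs_le_iff g1 intro: order_trans[OF _ gnn])
    show "AE \<omega> in M. (\<lambda>N. g (Z t \<omega>) * indicator (C N) \<omega>) \<longlonglongrightarrow> g (Z t \<omega>) * indicator (space M - A) \<omega>"
    proof (rule AE_I2)
      fix \<omega> assume \<omega>: "\<omega> \<in> space M"
      show "(\<lambda>N. g (Z t \<omega>) * indicator (C N) \<omega>) \<longlonglongrightarrow> g (Z t \<omega>) * indicator (space M - A) \<omega>"
      proof (cases "\<omega> \<in> space M - A")
        case True
        then obtain T where "\<omega> \<in> C T" unfolding CA by blast
        then have "\<forall>N\<ge>T. \<omega> \<in> C N" by (auto simp: C_def intro: le_trans)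
        then have "eventually (\<lambda>N. g (Z t \<omega>) * indicator (C N) \<omega> = g (Z t \<omega>) * indicator (space M - A) \<omega>) sequentially"
          using True unfolding eventually_sequentially by (metis indicator_simps(1))
        then show ?thesis by (rule tendsto_eventually)
      next
        case False
        then have "\<omega> \<notin> C N" for N unfolding CA by blast
        then show ?thesis using False by simp
      qed
    qed
  qed
  have "(\<integral>\<omega>. g (Z t \<omega>) * indicator (space M - A) \<omega> \<partial>M) \<le> q * (\<integral>\<omega>. g (Z t \<omega>) \<partial>M)"
    by (rule LIMSEQ_le_const2[OF lim]) (use step in blast)
  then show ?thesis unfolding A_def .
qed


lemma key2:
  fixes g :: "nat multiset \<Rightarrow> real"
  assumes MGW: "is_MGW M Z p i0"
    and types: "\<forall>i\<in>S. \<forall>x\<in>set_pmf (p i). set_mset x \<subseteq> S" and i0: "i0 \<in> S"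
    and qbound: "\<forall>i\<in>S. ext_prob p i \<le> q" and q1: "q \<le> 1"
    and g0: "g {#} = 0" and gnn: "\<And>x. 0 \<le> g x" and g1: "\<And>x. g x \<le> 1"
  shows "(1 - q) * (\<integral>\<omega>. g (Z t \<omega>) \<partial>M) \<le>
     (\<integral>\<omega>. g (Z t \<omega>) * indicator (\<Inter>T. {\<omega>\<in>space M. size (Z T \<omega>) > 0}) \<omega> \<partial>M)"
proof -
  interpret prob_space M using MGW by (simp add: is_MGW_def)
  have Zm[measurable]: "Z s \<in> measurable M (count_space UNIV)" for s
    using MGW by (simp add: is_MGW_def)
  define A where "A = (\<Inter>T. {\<omega>\<in>space M. size (Z T \<omega>) > 0})"
  have Am: "A \<in> sets M" unfolding A_def by measurable
  have Acm: "space M - A \<in> sets M" using Am by blast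
  have gm: "(\<lambda>\<omega>. g (Z t \<omega>)) \<in> borel_measurable M"
    by (rule measurable_compose[OF Zm borel_measurable_count_space])
  have bnd: "integrable M f" if "f \<in> borel_measurable M" "\<And>\<omega>. \<bar>f \<omega>\<bar> \<le> 1" for f :: "_ \<Rightarrow> real"
    by (rule finite_measure.integrable_const_bound[where B=1, OF finite_measure_axioms]) (use that in \<open>auto intro: AE_I2\<close>)
  have gabs: "\<bar>g x\<bar> \<le> 1" for x using gnn[of x] g1[of x] by simp
  have i1: "integrable M (\<lambda>\<omega>. g (Z t \<omega>) * indicator A \<omega>)"
    by (rule bnd) (use gm Am in measurable, auto simp: indicator_def gabs)
  have i2: "integrable M (\<lambda>\<omega>. g (Z t \<omega>) * indicator (space M - A) \<omega>)"
    by (rule bnd) (use gm Acm in measurable, auto simp: indicator_def gabs)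
  have "(\<integral>\<omega>. g (Z t \<omega>) \<partial>M) = (\<integral>\<omega>. g (Z t \<omega>) * indicator A \<omega> + g (Z t \<omega>) * indicator (space M - A) \<omega> \<partial>M)"
    by (rule Bochner_Integration.integral_cong[OF refl]) (auto simp: indicator_def)
  also have "\<dots> = (\<integral>\<omega>. g (Z t \<omega>) * indicator A \<omega> \<partial>M) + (\<integral>\<omega>. g (Z t \<omega>) * indicator (space M - A) \<omega> \<partial>M)"
    by (rule Bochner_Integration.integral_add[OF i1 i2])
  finally have eq: "(\<integral>\<omega>. g (Z t \<omega>) \<partial>M) = (\<integral>\<omega>. g (Z t \<omega>) * indicator A \<omega> \<partial>M) + (\<integral>\<omega>. g (Z t \<omega>) * indicator (space M - A) \<omega> \<partial>M)" .
  have "(\<integral>\<omega>. g (Z t \<omega>) * indicator (space M - A) \<omega> \<partial>M) \<le> q * (\<integral>\<omega>. g (Z t \<omega>) \<partial>M)"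
    unfolding A_def by (rule key[of M Z p i0 S q g t]) (use MGW types i0 qbound q1 g0 gnn g1 in auto)
  then show ?thesis using eq unfolding A_def by (simp add: algebra_simps)
qed

lemma alg:
  fixes a b c PA Pt :: real
  assumes "0 < c" "c * b \<le> a" "a \<le> b" "c * Pt \<le> PA" "PA \<le> Pt" "0 \<le> a" "0 \<le> PA"
  shows "c * (b / Pt) \<le> a / PA \<and> a / PA \<le> 1 / c * (b / Pt)"
proof (cases "PA = 0")
  case True
  then have "Pt = 0" using assms by (smt (verit) mult_pos_pos)
  then show ?thesis using True by simp
next
  case False
  then have PA: "PA > 0" using assms by simp
  then have Pt: "Pt > 0" using assms by simp
  have b0: "0 \<le> b" using assms by simp
  have 1: "c * b * PA \<le> a * Pt"
  proof -
    have "c * b * PA \<le> c * b * Pt" using assms b0 by (simp add: mult_left_mono)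
    also have "\<dots> \<le> a * Pt" using assms Pt by (simp add: mult_right_mono)
    finally show ?thesis .
  qed
  have 2: "a * (c * Pt) \<le> b * PA"
  proof -
    have "a * (c * Pt) \<le> a * PA" using assms by (simp add: mult_left_mono)
    also have "\<dots> \<le> b * PA" using assms PA by (simp add: mult_right_mono)
    finally show ?thesis .
  qed
  show ?thesis
    using 1 2 PA Pt assms(1) by (simp add: field_simps)
qed



theorem mainTheorem12:
  fixes d :: enat and p :: "nat \<Rightarrow> nat multiset pmf" and i0 :: nat
    and M :: "'a measure" and Z :: "nat \<Rightarrow> 'a \<Rightarrow> nat multiset"
    and R :: real and \<nu> u :: "nat \<Rightarrow> real" and t r :: nat
  defines "S \<equiv> type_space d"
  assumes d_pos: "d \<ge> 1"
    and offspring_types: "\<forall>i\<in>S. \<forall>x\<in>set_pmf (p i). set_mset x \<subseteq> S"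
    and i0: "i0 \<in> S"
    and MGW: "is_MGW M Z p i0"
    \<comment> \<open>A1\<close>
    and irreducible: "\<forall>i\<in>S. \<forall>j\<in>S. \<exists>n. mean_pow S p (Suc n) i j > 0"
    and finite_means: "\<forall>n. \<forall>i\<in>S. \<forall>j\<in>S. mean_pow S p n i j < \<infinity>"
    and radius: "\<forall>i\<in>S. \<forall>j\<in>S.
                   conv_radius (\<lambda>n. enn2real (mean_pow S p n i j)) = ereal R"
    \<comment> \<open>A2\<close>
    and R_recurrent: "\<forall>i\<in>S. \<forall>j\<in>S. (\<Sum>n. mean_pow S p n i j * ennreal R ^ n) = \<infinity>"
    and R_range: "0 < R" "R < 1"
    and nu_pos: "\<forall>i\<in>S. \<nu> i > 0" and u_pos: "\<forall>i\<in>S. u i > 0"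
    and nu_left: "\<forall>j\<in>S. ennreal R * (\<Sum>i. if i \<in> S then ennreal (\<nu> i) * mean_mat p i j else 0)
                          = ennreal (\<nu> j)"
    and u_right: "\<forall>i\<in>S. ennreal R * (\<Sum>j. if j \<in> S then mean_mat p i j * ennreal (u j) else 0)
                          = ennreal (u i)"
    and u_nu: "(\<Sum>i. if i \<in> S then ennreal (u i * \<nu> i) else 0) = 1"
    and nu_sum: "(\<Sum>i. if i \<in> S then ennreal (\<nu> i) else 0) = 1"
    \<comment> \<open>A4\<close>
    and A4: "(SUP i\<in>S. ext_prob p i) < 1"
    \<comment> \<open>A5\<close>
    and A5: "\<exists>c>0. \<forall>i\<in>S. c \<le> u i"
    and t_pos: "t \<ge> 1" and r_pos: "r \<ge> 1"
  shows
    "(1 - (SUP i\<in>S. ext_prob p i)) *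
        cond_exp_event M (\<lambda>\<omega>. 1 / real (size (Z t \<omega>)) ^ r) {\<omega>\<in>space M. size (Z t \<omega>) > 0}
       \<le> cond_exp_event M (\<lambda>\<omega>. 1 / real (size (Z t \<omega>)) ^ r)
            (\<Inter>T. {\<omega>\<in>space M. size (Z T \<omega>) > 0})
     \<and> cond_exp_event M (\<lambda>\<omega>. 1 / real (size (Z t \<omega>)) ^ r)
            (\<Inter>T. {\<omega>\<in>space M. size (Z T \<omega>) > 0})
       \<le> 1 / (1 - (SUP i\<in>S. ext_prob p i)) *
         cond_exp_event M (\<lambda>\<omega>. 1 / real (size (Z t \<omega>)) ^ r) {\<omega>\<in>space M. size (Z t \<omega>) > 0}"
proof -
  interpret prob_space M using MGW by (simp add: is_MGW_def)
  have Zm[measurable]: "Z s \<in> measurable M (count_space UNIV)" for s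
    using MGW by (simp add: is_MGW_def)
  have ext_le1: "ext_prob p i \<le> 1" for i
    unfolding ext_prob_def by (rule cSUP_least) auto
  have bdd: "bdd_above (ext_prob p ` S)"
    by (rule bdd_aboveI[where M=1]) (auto simp: ext_le1)
  define q where "q = (SUP i\<in>S. ext_prob p i)"
  have qbound: "\<forall>i\<in>S. ext_prob p i \<le> q"
    unfolding q_def using bdd by (auto intro: cSUP_upper)
  have q1: "q \<le> 1"
    unfolding q_def using i0 by (auto intro!: cSUP_least ext_le1)
  have c0: "0 < 1 - q" using A4 unfolding q_def by simp
  define A where "A = (\<Inter>T. {\<omega>\<in>space M. size (Z T \<omega>) > 0})"
  define At where "At = {\<omega>\<in>space M. size (Z t \<omega>) > 0}"
  have Am: "A \<in> sets M" unfolding A_def by measurable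
  have Atm: "At \<in> sets M" unfolding At_def by measurable
  have AAt: "A \<subseteq> At" unfolding A_def At_def by blast
  have g0: "1 / real (size ({#} :: nat multiset)) ^ r = 0" using r_pos by simp
  have gnn: "0 \<le> 1 / real (size x) ^ r" for x :: "nat multiset" by simp
  have g1: "1 / real (size x) ^ r \<le> 1" for x :: "nat multiset"
  proof (cases "size x = 0")
    case True
    then show ?thesis using r_pos by (simp add: power_0_left)
  next
    case False
    then have "1 \<le> size x" by linarith
    then have "1 \<le> real (size x)" by simp
    then have "1 \<le> real (size x) ^ r" by (rule one_le_power)
    then show ?thesis using divide_le_eq_1[of 1 "real (size x) ^ r"] by linarith
  qed
  have kg: "(1 - q) * (\<integral>\<omega>. 1 / real (size (Z t \<omega>)) ^ r \<partial>M) \<le>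
     (\<integral>\<omega>. 1 / real (size (Z t \<omega>)) ^ r * indicator A \<omega> \<partial>M)"
    unfolding A_def
    by (rule key2[of M Z p i0 S q "\<lambda>x. 1 / real (size x) ^ r" t])
       (use MGW offspring_types i0 qbound q1 g0 gnn g1 in auto)
  have kh: "(1 - q) * (\<integral>\<omega>. (if size (Z t \<omega>) > 0 then (1::real) else 0) \<partial>M) \<le>
     (\<integral>\<omega>. (if size (Z t \<omega>) > 0 then (1::real) else 0) * indicator A \<omega> \<partial>M)"
    unfolding A_def
    by (rule key2[of M Z p i0 S q "\<lambda>x. if size x > 0 then 1 else 0" t])
       (use MGW offspring_types i0 qbound q1 in auto)
  have b_eq: "(\<integral>\<omega>. 1 / real (size (Z t \<omega>)) ^ r * indicator At \<omega> \<partial>M) = (\<integral>\<omega>. 1 / real (size (Z t \<omega>)) ^ r \<partial>M)"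
    by (rule Bochner_Integration.integral_cong[OF refl]) (use r_pos in \<open>auto simp: At_def indicator_def\<close>)
  have PA_eq: "(\<integral>\<omega>. (if size (Z t \<omega>) > 0 then (1::real) else 0) * indicator A \<omega> \<partial>M) = measure M A"
  proof -
    have "(\<integral>\<omega>. (if size (Z t \<omega>) > 0 then (1::real) else 0) * indicator A \<omega> \<partial>M) = (\<integral>\<omega>. indicator A \<omega> \<partial>M)"
      by (rule Bochner_Integration.integral_cong[OF refl]) (use AAt in \<open>auto simp: At_def indicator_def\<close>)
    then show ?thesis using Am by (simp add: Int_absorb2 sets.sets_into_space)
  qed
  have Pt_eq: "(\<integral>\<omega>. (if size (Z t \<omega>) > 0 then (1::real) else 0) \<partial>M) = measure M At"
  proof -
    have "(\<integral>\<omega>. (if size (Z t \<omega>) > 0 then (1::real) else 0) \<partial>M) = (\<integral>\<omega>. indicator At \<omega> \<partial>M)"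
      by (rule Bochner_Integration.integral_cong[OF refl]) (auto simp: At_def indicator_def)
    then show ?thesis using Atm by (simp add: Int_absorb2 sets.sets_into_space)
  qed
  have gm: "(\<lambda>\<omega>. 1 / real (size (Z t \<omega>)) ^ r) \<in> borel_measurable M"
    by (rule measurable_compose[OF Zm borel_measurable_count_space])
  have bnd: "integrable M f" if "f \<in> borel_measurable M" "\<And>\<omega>. \<bar>f \<omega>\<bar> \<le> 1" for f :: "_ \<Rightarrow> real"
    by (rule integrable_const_bound[where B=1]) (use that in \<open>auto intro: AE_I2\<close>)
  have ab: "(\<integral>\<omega>. 1 / real (size (Z t \<omega>)) ^ r * indicator A \<omega> \<partial>M) \<le> (\<integral>\<omega>. 1 / real (size (Z t \<omega>)) ^ r \<partial>M)"
  proof (rule integral_mono)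
    show "integrable M (\<lambda>\<omega>. 1 / real (size (Z t \<omega>)) ^ r * indicator A \<omega>)"
      by (rule bnd) (use gm Am in measurable, auto simp: indicator_def g1)
    show "integrable M (\<lambda>\<omega>. 1 / real (size (Z t \<omega>)) ^ r)"
      by (rule bnd) (use gm in measurable, auto simp: g1)
    show "1 / real (size (Z t \<omega>)) ^ r * indicator A \<omega> \<le> 1 / real (size (Z t \<omega>)) ^ r" for \<omega>
      by (simp add: indicator_def)
  qed
  have a0: "0 \<le> (\<integral>\<omega>. 1 / real (size (Z t \<omega>)) ^ r * indicator A \<omega> \<partial>M)"
    by (rule Bochner_Integration.integral_nonneg) simp
  have PAPt: "measure M A \<le> measure M At"
    using AAt Atm by (rule finite_measure_mono)
  have "(1 - q) * ((\<integral>\<omega>. 1 / real (size (Z t \<omega>)) ^ r * indicator At \<omega> \<partial>M) / measure M At)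
       \<le> (\<integral>\<omega>. 1 / real (size (Z t \<omega>)) ^ r * indicator A \<omega> \<partial>M) / measure M A \<and>
     (\<integral>\<omega>. 1 / real (size (Z t \<omega>)) ^ r * indicator A \<omega> \<partial>M) / measure M A
       \<le> 1 / (1 - q) * ((\<integral>\<omega>. 1 / real (size (Z t \<omega>)) ^ r * indicator At \<omega> \<partial>M) / measure M At)"
    unfolding b_eq
    by (rule alg[OF c0 kg ab]) (use kh PA_eq Pt_eq PAPt a0 in auto)
  then show ?thesis
    unfolding cond_exp_event_def q_def[symmetric] A_def[symmetric] At_def[symmetric] .
qed

end
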